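(* Let $\mathcal{AF}_{\vdash}=(\vdash,\overline{\cdot},\widehat{\cdot})$ be a setting and let $\vdash^{\emptyset}$ be the restriction of $\vdash$ to pairs $(\Gamma,\gamma)$ for which there is no $(\emptyset,\delta)\in{\vdash}$ with $\delta\in\overline{\psi}$ for some $\psi\in\widehat{\Gamma}$. If the setting $(\vdash^{\emptyset},\overline{\cdot},\widehat{\cdot})$ satisfies Pre-Relevance, then for each $\mathsf{Sem}\in\{\mathsf{Grd},\mathsf{Prf}\}$ the relation $\mathrel{\mid\!\sim}^{\mathcal{AF}_{\vdash}}_{\mathsf{Sem}}$ satisfies Non-Interference: for all $\mathcal{S}_1\cup\{\phi\}\cup\mathcal{S}_2\subseteq\mathcal{L}$ with $(\mathcal{S}_1\cup\{\phi\})\mid\mathcal{S}_2$, $\mathcal{S}_1\mathrel{\mid\!\sim}^{\mathcal{AF}_{\vdash}}_{\mathsf{Sem}}\phi$ iff $\mathcal{S}_1\cup\mathcal{S}_2\mathrel{\mid\!\sim}^{\mathcal{AF}_{\vdash}}_{\mathsf{Sem}}\phi$.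
   Context: $\mathcal{L}$ is the set of formulas of a language built from propositional atoms; $\mathsf{Atoms}(\mathcal{S})$ is the set of atoms occurring in $\mathcal{S}$, and $\mathcal{S}_1\mid\mathcal{S}_2$ means $\mathsf{Atoms}(\mathcal{S}_1)\cap\mathsf{Atoms}(\mathcal{S}_2)=\emptyset$. A setting is $(\vdash,\overline{\cdot},\widehat{\cdot})$ with ${\vdash}\subseteq\wp_{\sf fin}(\mathcal{L})\times\mathcal{L}$ arbitrary, $\overline{\cdot}:\mathcal{L}\to\wp(\mathcal{L})$, $\widehat{\cdot}$ assigning to each nonempty finite set of formulas a finite set of formulas, with $\widehat{\emptyset}=\emptyset$. $\mathit{Arg}_{\vdash}(\mathcal{S})=\{(\Gamma,\gamma):\Gamma\subseteq\mathcal{S}\text{ finite},\Gamma\vdash\gamma\}$; in $\mathcal{AF}_{\vdash}(\mathcal{S})$, $(\Gamma,\gamma)$ attacks $(\Gamma',\gamma')$ iff $\gamma\in\overline{\phi}$ for some $\phi\in\widehat{\Gamma'}$. Dung semantics: conflict-free, defends, admissible, complete (admissible and contains all it defends), preferred ($\subseteq$-maximal complete), grounded ($\subseteq$-minimal complete). $\mathcal{S}\mathrel{\mid\!\sim}^{\mathcal{AF}}_{\mathsf{Sem}}\phi$ iff every $\mathsf{Sem}$-extension of $\mathcal{AF}(\mathcal{S})$ contains an argument with conclusion $\phi$. A setting satisfies Pre-Relevance iff (a) for all $\mathcal{S}_1,\mathcal{S}_2,\phi$ with $\mathcal{S}_1\cup\{\phi\}\mid\mathcal{S}_2$, $\mathcal{S}_1\cup\mathcal{S}_2\vdash\phi$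 implies $\mathcal{S}_1'\vdash\phi$ for some $\mathcal{S}_1'\subseteq\mathcal{S}_1$; (b) it is prime: for all sets of atoms $\mathcal{A}_1\mid\mathcal{A}_2$, all finite $\mathcal{S}_1,\mathcal{T}_1,\mathcal{S}_2,\mathcal{T}_2$ with $\mathsf{Atoms}(\mathcal{S}_i),\mathsf{Atoms}(\mathcal{T}_i)\subseteq\mathcal{A}_i$, and all $\phi,\psi$ with $\psi\in\overline{\phi}$, $\phi\in\widehat{\mathcal{T}_1\cup\mathcal{T}_2}$: if $\mathcal{S}_1\cup\mathcal{S}_2\vdash\psi$ then there are $i\in\{1,2\}$, $\mathcal{S}_i'\subseteq\mathcal{S}_i$, $\phi_i\in\widehat{\mathcal{T}_i}$, $\psi_i\in\overline{\phi_i}$ with $\mathcal{S}_i'\vdash\psi_i$; (c) $\widehat{\Delta}\subseteq\widehat{\Delta\cup\Delta'}$ for all finite $\Delta,\Delta'$. *)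

theory Defs
  imports Main
begin

definition Atoms :: "('f \<Rightarrow> 'a set) \<Rightarrow> 'f set \<Rightarrow> 'a set" where
  "Atoms atoms S = (\<Union>x\<in>S. atoms x)"

definition atom_disjoint :: "('f \<Rightarrow> 'a set) \<Rightarrow> 'f set \<Rightarrow> 'f set \<Rightarrow> bool" where
  "atom_disjoint atoms S1 S2 \<longleftrightarrow> Atoms atoms S1 \<inter> Atoms atoms S2 = {}"

(* A setting (|-, contrary, hat): |- relates finite sets to formulas,
   hat assigns finite sets to finite sets, hat {} = {} *)
definition is_setting ::
  "('f set \<Rightarrow> 'f \<Rightarrow> bool) \<Rightarrow> ('f \<Rightarrow> 'f set) \<Rightarrow> ('f set \<Rightarrow> 'f set) \<Rightarrow> bool" where
  "is_setting vd cb hat \<longleftrightarrow>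
     (\<forall>\<Gamma> \<gamma>. vd \<Gamma> \<gamma> \<longrightarrow> finite \<Gamma>) \<and>
     (\<forall>\<Delta>. finite \<Delta> \<longrightarrow> finite (hat \<Delta>)) \<and> hat {} = {}"

definition Arg :: "('f set \<Rightarrow> 'f \<Rightarrow> bool) \<Rightarrow> 'f set \<Rightarrow> ('f set \<times> 'f) set" where
  "Arg vd S = {(\<Gamma>, \<gamma>). \<Gamma> \<subseteq> S \<and> finite \<Gamma> \<and> vd \<Gamma> \<gamma>}"

definition attacks :: "('f \<Rightarrow> 'f set) \<Rightarrow> ('f set \<Rightarrow> 'f set) \<Rightarrow> 'f set \<times> 'f \<Rightarrow> 'f set \<times> 'f \<Rightarrow> bool" where
  "attacks cb hat a b \<longleftrightarrow> (\<exists>\<phi>\<in>hat (fst b). snd a \<in> cb \<phi>)"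

definition conflict_free :: "'x set \<Rightarrow> ('x \<Rightarrow> 'x \<Rightarrow> bool) \<Rightarrow> 'x set \<Rightarrow> bool" where
  "conflict_free A R E \<longleftrightarrow> E \<subseteq> A \<and> (\<forall>a\<in>E. \<forall>b\<in>E. \<not> R a b)"

definition defends :: "'x set \<Rightarrow> ('x \<Rightarrow> 'x \<Rightarrow> bool) \<Rightarrow> 'x set \<Rightarrow> 'x \<Rightarrow> bool" where
  "defends A R E a \<longleftrightarrow> (\<forall>b\<in>A. R b a \<longrightarrow> (\<exists>c\<in>E. R c b))"

definition admissible :: "'x set \<Rightarrow> ('x \<Rightarrow> 'x \<Rightarrow> bool) \<Rightarrow> 'x set \<Rightarrow> bool" where
  "admissible A R E \<longleftrightarrow> conflict_free A R E \<and> (\<forall>a\<in>E. defends A R E a)"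

definition complete_ext :: "'x set \<Rightarrow> ('x \<Rightarrow> 'x \<Rightarrow> bool) \<Rightarrow> 'x set \<Rightarrow> bool" where
  "complete_ext A R E \<longleftrightarrow> admissible A R E \<and> (\<forall>a\<in>A. defends A R E a \<longrightarrow> a \<in> E)"

definition preferred_ext :: "'x set \<Rightarrow> ('x \<Rightarrow> 'x \<Rightarrow> bool) \<Rightarrow> 'x set \<Rightarrow> bool" where
  "preferred_ext A R E \<longleftrightarrow> complete_ext A R E \<and>
     (\<forall>E'. complete_ext A R E' \<and> E \<subseteq> E' \<longrightarrow> E' = E)"

definition grounded_ext :: "'x set \<Rightarrow> ('x \<Rightarrow> 'x \<Rightarrow> bool) \<Rightarrow> 'x set \<Rightarrow> bool" where
  "grounded_ext A R E \<longleftrightarrow> complete_ext A R E \<and>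
     (\<forall>E'. complete_ext A R E' \<and> E' \<subseteq> E \<longrightarrow> E' = E)"

definition af_entails ::
  "(('f set \<times> 'f) set \<Rightarrow> (('f set \<times> 'f) \<Rightarrow> ('f set \<times> 'f) \<Rightarrow> bool) \<Rightarrow> ('f set \<times> 'f) set \<Rightarrow> bool)
   \<Rightarrow> ('f set \<Rightarrow> 'f \<Rightarrow> bool) \<Rightarrow> ('f \<Rightarrow> 'f set) \<Rightarrow> ('f set \<Rightarrow> 'f set) \<Rightarrow> 'f set \<Rightarrow> 'f \<Rightarrow> bool" where
  "af_entails Sem vd cb hat S \<phi> \<longleftrightarrow>
     (\<forall>E. Sem (Arg vd S) (attacks cb hat) E \<longrightarrow> (\<exists>a\<in>E. snd a = \<phi>))"

definition restrict_empty ::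
  "('f set \<Rightarrow> 'f \<Rightarrow> bool) \<Rightarrow> ('f \<Rightarrow> 'f set) \<Rightarrow> ('f set \<Rightarrow> 'f set) \<Rightarrow> 'f set \<Rightarrow> 'f \<Rightarrow> bool" where
  "restrict_empty vd cb hat \<Gamma> \<gamma> \<longleftrightarrow>
     vd \<Gamma> \<gamma> \<and> \<not> (\<exists>\<delta> \<psi>. vd {} \<delta> \<and> \<psi> \<in> hat \<Gamma> \<and> \<delta> \<in> cb \<psi>)"

definition prime_setting ::
  "('f \<Rightarrow> 'a set) \<Rightarrow> ('f set \<Rightarrow> 'f \<Rightarrow> bool) \<Rightarrow> ('f \<Rightarrow> 'f set) \<Rightarrow> ('f set \<Rightarrow> 'f set) \<Rightarrow> bool" where
  "prime_setting atoms vd cb hat \<longleftrightarrow>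
     (\<forall>A1 A2 S1 T1 S2 T2 \<phi> \<psi>.
        A1 \<inter> A2 = {} \<and> finite S1 \<and> finite T1 \<and> finite S2 \<and> finite T2 \<and>
        Atoms atoms S1 \<subseteq> A1 \<and> Atoms atoms T1 \<subseteq> A1 \<and>
        Atoms atoms S2 \<subseteq> A2 \<and> Atoms atoms T2 \<subseteq> A2 \<and>
        \<psi> \<in> cb \<phi> \<and> \<phi> \<in> hat (T1 \<union> T2) \<and> vd (S1 \<union> S2) \<psi> \<longrightarrow>
        (\<exists>S' \<phi>' \<psi>'. S' \<subseteq> S1 \<and> \<phi>' \<in> hat T1 \<and> \<psi>' \<in> cb \<phi>' \<and> vd S' \<psi>') \<or>
        (\<exists>S' \<phi>' \<psi>'. S' \<subseteq> S2 \<and> \<phi>' \<in> hat T2 \<and> \<psi>' \<in> cb \<phi>' \<and> vd S' \<psi>'))"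

definition pre_relevance ::
  "('f \<Rightarrow> 'a set) \<Rightarrow> ('f set \<Rightarrow> 'f \<Rightarrow> bool) \<Rightarrow> ('f \<Rightarrow> 'f set) \<Rightarrow> ('f set \<Rightarrow> 'f set) \<Rightarrow> bool" where
  "pre_relevance atoms vd cb hat \<longleftrightarrow>
     (\<forall>S1 S2 \<phi>. atom_disjoint atoms (S1 \<union> {\<phi>}) S2 \<longrightarrow> vd (S1 \<union> S2) \<phi> \<longrightarrow>
        (\<exists>S1'. S1' \<subseteq> S1 \<and> vd S1' \<phi>)) \<and>
     prime_setting atoms vd cb hat \<and>
     (\<forall>\<Delta> \<Delta>'. finite \<Delta> \<longrightarrow> finite \<Delta>' \<longrightarrow> hat \<Delta> \<subseteq> hat (\<Delta> \<union> \<Delta>'))"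

definition non_interference :: "('f \<Rightarrow> 'a set) \<Rightarrow> ('f set \<Rightarrow> 'f \<Rightarrow> bool) \<Rightarrow> bool" where
  "non_interference atoms ent \<longleftrightarrow>
     (\<forall>S1 S2 \<phi>. atom_disjoint atoms (S1 \<union> {\<phi>}) S2 \<longrightarrow>
        (ent S1 \<phi> \<longleftrightarrow> ent (S1 \<union> S2) \<phi>))"

end

theory Submission
  imports Defs
begin


lemma defends_mono: "E \<subseteq> E' \<Longrightarrow> defends A R E a \<Longrightarrow> defends A R E' a"
  unfolding defends_def by blast

lemma admissible_insert:
  assumes "admissible A R E" "a \<in> A" "defends A R E a"
  shows "admissible A R (insert a E)"
proof -
  have cf: "conflict_free A R E" and def: "\<forall>x\<in>E. defends A R E x"
    using assms(1) unfolding admissible_def by auto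
  have EA: "E \<subseteq> A" using cf unfolding conflict_free_def by auto
  have dall: "\<forall>x\<in>insert a E. defends A R E x" using def assms(3) by auto
  have "conflict_free A R (insert a E)"
    unfolding conflict_free_def
  proof (intro conjI ballI)
    show "insert a E \<subseteq> A" using EA assms(2) by auto
  next
    fix x y assume x: "x \<in> insert a E" and y: "y \<in> insert a E"
    show "\<not> R x y"
    proof
      assume Rxy: "R x y"
      have xA: "x \<in> A" using x EA assms(2) by auto
      obtain c where c: "c \<in> E" "R c x" using dall y Rxy xA unfolding defends_def by blast
      have "c \<in> A" using c EA by auto
      then obtain d where d: "d \<in> E" "R d c" using dall x c unfolding defends_def by blast
      show False using cf c d unfolding conflict_free_def by blast
    qed
  qed
  moreover have "\<forall>x\<in>insert a E. defends A R (insert a E) x"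
    using dall defends_mono[of E "insert a E"] by blast
  ultimately show ?thesis unfolding admissible_def by blast
qed

definition max_adm where
  "max_adm A R E \<longleftrightarrow> admissible A R E \<and> (\<forall>E'. admissible A R E' \<and> E \<subseteq> E' \<longrightarrow> E' = E)"

lemma max_adm_complete: assumes m: "max_adm A R E" shows "complete_ext A R E"
proof -
  have adm: "admissible A R E" using m unfolding max_adm_def by (rule conjunct1)
  have mx: "\<forall>E'. admissible A R E' \<and> E \<subseteq> E' \<longrightarrow> E' = E"
    using m unfolding max_adm_def by (rule conjunct2)
  have "\<forall>a\<in>A. defends A R E a \<longrightarrow> a \<in> E"
  proof (intro ballI impI)
    fix a assume a: "a \<in> A" "defends A R E a"
    have "admissible A R (insert a E)" by (rule admissible_insert[OF adm a])
    moreover have "E \<subseteq> insert a E" by (rule subset_insertI)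
    ultimately have "insert a E = E" using mx by simp
    then show "a \<in> E" by (metis insertI1)
  qed
  then show ?thesis using adm unfolding complete_ext_def by auto
qed

lemma exists_max_adm:
  assumes "admissible A R E0"
  shows "\<exists>M. max_adm A R M \<and> E0 \<subseteq> M"
proof -
  let ?S = "{E. admissible A R E \<and> E0 \<subseteq> E}"
  have "\<exists>M\<in>?S. \<forall>X\<in>?S. M \<subseteq> X \<longrightarrow> X = M"
  proof (rule subset_Zorn_nonempty)
    show "?S \<noteq> {}" using assms by blast
  next
    fix C assume Cne: "C \<noteq> {}" and ch: "subset.chain ?S C"
    have CS: "C \<subseteq> ?S" using ch unfolding subset_chain_def by blast
    have lin: "\<forall>x\<in>C. \<forall>y\<in>C. x \<subseteq> y \<or> y \<subseteq> x" using ch unfolding subset_chain_def by blast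
    have "conflict_free A R (\<Union>C)"
      unfolding conflict_free_def
    proof (intro conjI ballI)
      show "\<Union>C \<subseteq> A" using CS unfolding admissible_def conflict_free_def by blast
    next
      fix x y assume "x \<in> \<Union>C" "y \<in> \<Union>C"
      then obtain X Y where XY: "X \<in> C" "Y \<in> C" "x \<in> X" "y \<in> Y" by blast
      then have "(x \<in> X \<and> y \<in> X \<and> X \<in> C) \<or> (x \<in> Y \<and> y \<in> Y \<and> Y \<in> C)" using lin by blast
      then show "\<not> R x y" using CS unfolding admissible_def conflict_free_def by blast
    qed
    moreover have "\<forall>x\<in>\<Union>C. defends A R (\<Union>C) x"
    proof
      fix x assume "x \<in> \<Union>C"
      then obtain X where "X \<in> C" "x \<in> X" by blast
      then have "defends A R X x" using CS unfolding admissible_def by blast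
      then show "defends A R (\<Union>C) x" using defends_mono[of X "\<Union>C"] \<open>X \<in> C\<close> by blast
    qed
    moreover have "E0 \<subseteq> \<Union>C" using Cne CS by blast
    ultimately show "\<Union>C \<in> ?S" unfolding admissible_def by blast
  qed
  then obtain M where M1: "M \<in> ?S" and M2: "\<forall>X\<in>?S. M \<subseteq> X \<longrightarrow> X = M" by (elim bexE)
  have Madm: "admissible A R M" and ME0: "E0 \<subseteq> M" using M1 by auto
  have "\<forall>E'. admissible A R E' \<and> M \<subseteq> E' \<longrightarrow> E' = M"
  proof (intro allI impI)
    fix E' assume E': "admissible A R E' \<and> M \<subseteq> E'"
    then have "E' \<in> ?S" using ME0 by auto
    then show "E' = M" using M2 E' by (elim ballE) blast+
  qed
  then have "max_adm A R M" unfolding max_adm_def using Madm by (intro conjI)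
  then show ?thesis using ME0 by auto
qed

lemma preferred_iff: "preferred_ext A R E \<longleftrightarrow> max_adm A R E"
proof
  assume p: "preferred_ext A R E"
  have c: "complete_ext A R E" using p unfolding preferred_ext_def by (rule conjunct1)
  have pm: "\<forall>E'. complete_ext A R E' \<and> E \<subseteq> E' \<longrightarrow> E' = E"
    using p unfolding preferred_ext_def by (rule conjunct2)
  have "\<forall>E'. admissible A R E' \<and> E \<subseteq> E' \<longrightarrow> E' = E"
  proof (intro allI impI)
    fix E' assume E': "admissible A R E' \<and> E \<subseteq> E'"
    obtain M where M: "max_adm A R M" "E' \<subseteq> M" using exists_max_adm E' by blast
    have "complete_ext A R M" using M max_adm_complete by blast
    moreover have "E \<subseteq> M" using M E' by auto
    ultimately have "M = E" using pm[rule_format, of M] by blast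
    then show "E' = E" using M E' by auto
  qed
  moreover have "admissible A R E" using c unfolding complete_ext_def by auto
  ultimately show "max_adm A R E" unfolding max_adm_def by (rule conjI[rotated])
next
  assume m: "max_adm A R E"
  have "complete_ext A R E" using m by (rule max_adm_complete)
  moreover have "\<forall>E'. complete_ext A R E' \<and> E \<subseteq> E' \<longrightarrow> E' = E"
  proof (intro allI impI)
    fix E' assume "complete_ext A R E' \<and> E \<subseteq> E'"
    then have "admissible A R E' \<and> E \<subseteq> E'" unfolding complete_ext_def by blast
    then show "E' = E" using m unfolding max_adm_def by blast
  qed
  ultimately show "preferred_ext A R E" unfolding preferred_ext_def by (rule conjI)
qed

definition charF where "charF A R E = {a\<in>A. defends A R E a}"

lemma mono_charF: "mono (charF A R)"
proof (rule monoI)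
  fix X Y :: "'a set" assume "X \<subseteq> Y"
  then show "charF A R X \<subseteq> charF A R Y" unfolding charF_def using defends_mono[of X Y A R] by blast
qed

lemma complete_lfp: "complete_ext A R (lfp (charF A R))"
proof -
  let ?G = "lfp (charF A R)"
  have hfix: "?G = charF A R ?G" using lfp_unfold[OF mono_charF] .
  have mem: "x \<in> ?G \<longleftrightarrow> x \<in> A \<and> defends A R ?G x" for x
  proof -
    have "(x \<in> ?G) = (x \<in> charF A R ?G)" using hfix by (rule arg_cong[where f="\<lambda>S. x \<in> S"])
    also have "\<dots> = (x \<in> A \<and> defends A R ?G x)" by (simp add: charF_def)
    finally show ?thesis .
  qed
  have mo: "mono (charF A R)" by (rule mono_charF)
  have nc: "\<forall>a\<in>?G. \<forall>b\<in>?G. \<not> R a b"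
  proof (rule lfp_ordinal_induct[of "charF A R" "\<lambda>S. \<forall>a\<in>S. \<forall>b\<in>?G. \<not> R a b", OF mo])
    fix S assume P: "\<forall>a\<in>S. \<forall>b\<in>?G. \<not> R a b" and SG: "S \<le> ?G"
    show "\<forall>a\<in>charF A R S. \<forall>b\<in>?G. \<not> R a b"
    proof (intro ballI notI)
      fix a b assume a: "a \<in> charF A R S" and b: "b \<in> ?G" and Rab: "R a b"
      have aA: "a \<in> A" and da: "defends A R S a" using a unfolding charF_def by auto
      have "defends A R ?G b" using b mem by blast
      then obtain c where c: "c \<in> ?G" "R c a" using aA Rab unfolding defends_def by blast
      have "c \<in> A" using c mem by blast
      then obtain d where "d \<in> S" "R d c" using da c unfolding defends_def by blast
      then show False using P c by blast
    qed
  next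
    fix M assume "\<forall>S\<in>M. \<forall>a\<in>S. \<forall>b\<in>?G. \<not> R a b"
    then show "\<forall>a\<in>Sup M. \<forall>b\<in>?G. \<not> R a b" by blast
  qed
  have GA: "?G \<subseteq> A" using mem by blast
  have d1: "\<forall>a\<in>?G. defends A R ?G a" using mem by blast
  have d2: "\<forall>a\<in>A. defends A R ?G a \<longrightarrow> a \<in> ?G" using mem by blast
  have cf: "conflict_free A R ?G" unfolding conflict_free_def using GA nc by (intro conjI)
  have ad: "admissible A R ?G" unfolding admissible_def using cf d1 by (intro conjI)
  show ?thesis unfolding complete_ext_def using ad d2 by (intro conjI)
qed

lemma lfp_le_complete: "complete_ext A R E \<Longrightarrow> lfp (charF A R) \<subseteq> E"
  by (rule lfp_lowerbound) (auto simp: charF_def complete_ext_def)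

lemma grounded_iff: "grounded_ext A R E \<longleftrightarrow> E = lfp (charF A R)"
proof
  assume g: "grounded_ext A R E"
  then have cE: "complete_ext A R E" unfolding grounded_ext_def by (rule conjunct1)
  then have sub: "lfp (charF A R) \<subseteq> E" by (rule lfp_le_complete)
  have mx: "\<forall>E'. complete_ext A R E' \<and> E' \<subseteq> E \<longrightarrow> E' = E" using g unfolding grounded_ext_def by (rule conjunct2)
  have "lfp (charF A R) = E" by (rule mx[rule_format], rule conjI, rule complete_lfp, rule sub)
  then show "E = lfp (charF A R)" by (rule sym)
next
  assume e: "E = lfp (charF A R)"
  have "\<forall>E'. complete_ext A R E' \<and> E' \<subseteq> E \<longrightarrow> E' = E"
  proof (intro allI impI)
    fix E' assume h: "complete_ext A R E' \<and> E' \<subseteq> E"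
    then have "lfp (charF A R) \<subseteq> E'" using lfp_le_complete by blast
    moreover have "E' \<subseteq> E" using h by (rule conjunct2)
    ultimately show "E' = E" using e by (intro subset_antisym) simp_all
  qed
  moreover have "complete_ext A R E" unfolding e by (rule complete_lfp)
  ultimately show "grounded_ext A R E" unfolding grounded_ext_def by (intro conjI)
qed



lemma Atoms_mono: "X \<subseteq> Y \<Longrightarrow> Atoms atoms X \<subseteq> Atoms atoms Y"
  unfolding Atoms_def by blast

locale ni =
  fixes atoms :: "'f \<Rightarrow> 'a set" and vd :: "'f set \<Rightarrow> 'f \<Rightarrow> bool"
    and cb :: "'f \<Rightarrow> 'f set" and hat :: "'f set \<Rightarrow> 'f set"
    and S1 S2 :: "'f set" and \<phi> :: 'f
  assumes fin: "\<And>\<Gamma> \<gamma>. vd \<Gamma> \<gamma> \<Longrightarrow> finite \<Gamma>"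
    and hat0: "hat {} = {}"
    and emp: "\<And>\<Gamma> \<gamma> \<delta> \<psi>. vd \<Gamma> \<gamma> \<Longrightarrow> vd {} \<delta> \<Longrightarrow> \<psi> \<in> hat \<Gamma> \<Longrightarrow> \<delta> \<notin> cb \<psi>"
    and rel: "pre_relevance atoms vd cb hat"
    and disj: "atom_disjoint atoms (S1 \<union> {\<phi>}) S2"
begin

abbreviation "R \<equiv> attacks cb hat"
abbreviation "A1 \<equiv> Arg vd S1"
abbreviation "A \<equiv> Arg vd (S1 \<union> S2)"

lemma relA0: "\<forall>T1 T2 \<psi>. atom_disjoint atoms (T1 \<union> {\<psi>}) T2 \<longrightarrow> vd (T1 \<union> T2) \<psi> \<longrightarrow> (\<exists>T'. T' \<subseteq> T1 \<and> vd T' \<psi>)"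
  using rel unfolding pre_relevance_def by (rule conjunct1)

lemma relA: "atom_disjoint atoms (T1 \<union> {\<psi>}) T2 \<Longrightarrow> vd (T1 \<union> T2) \<psi> \<Longrightarrow> \<exists>T'. T' \<subseteq> T1 \<and> vd T' \<psi>"
  using relA0 by blast

lemma prime: "prime_setting atoms vd cb hat"
  using rel unfolding pre_relevance_def by (rule conjunct2[THEN conjunct1])

lemma hatc0: "\<forall>X Z. finite X \<longrightarrow> finite Z \<longrightarrow> hat X \<subseteq> hat (X \<union> Z)"
  using rel unfolding pre_relevance_def by (rule conjunct2[THEN conjunct2])

lemma hatc: "finite X \<Longrightarrow> finite Z \<Longrightarrow> hat X \<subseteq> hat (X \<union> Z)"
  using hatc0 by blast

lemma hat_mono: "finite Y \<Longrightarrow> X \<subseteq> Y \<Longrightarrow> hat X \<subseteq> hat Y"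
proof -
  assume a: "finite Y" "X \<subseteq> Y"
  then have "finite X" "finite (Y - X)" using finite_subset by blast+
  then have "hat X \<subseteq> hat (X \<union> (Y - X))" by (rule hatc)
  moreover have "X \<union> (Y - X) = Y" using a by blast
  ultimately show ?thesis by simp
qed

lemma prime_rule:
  assumes "B1 \<inter> B2 = {}" "finite X1" "finite Y1" "finite X2" "finite Y2"
    "Atoms atoms X1 \<subseteq> B1" "Atoms atoms Y1 \<subseteq> B1" "Atoms atoms X2 \<subseteq> B2" "Atoms atoms Y2 \<subseteq> B2"
    "\<psi> \<in> cb \<chi>" "\<chi> \<in> hat (Y1 \<union> Y2)" "vd (X1 \<union> X2) \<psi>"
  shows "(\<exists>S' \<phi>' \<psi>'. S' \<subseteq> X1 \<and> \<phi>' \<in> hat Y1 \<and> \<psi>' \<in> cb \<phi>' \<and> vd S' \<psi>') \<or>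
        (\<exists>S' \<phi>' \<psi>'. S' \<subseteq> X2 \<and> \<phi>' \<in> hat Y2 \<and> \<psi>' \<in> cb \<phi>' \<and> vd S' \<psi>')"
proof -
  have "\<forall>A1 A2 S1 T1 S2 T2 \<phi> \<psi>.
        A1 \<inter> A2 = {} \<and> finite S1 \<and> finite T1 \<and> finite S2 \<and> finite T2 \<and>
        Atoms atoms S1 \<subseteq> A1 \<and> Atoms atoms T1 \<subseteq> A1 \<and>
        Atoms atoms S2 \<subseteq> A2 \<and> Atoms atoms T2 \<subseteq> A2 \<and>
        \<psi> \<in> cb \<phi> \<and> \<phi> \<in> hat (T1 \<union> T2) \<and> vd (S1 \<union> S2) \<psi> \<longrightarrow>
        (\<exists>S' \<phi>' \<psi>'. S' \<subseteq> S1 \<and> \<phi>' \<in> hat T1 \<and> \<psi>' \<in> cb \<phi>' \<and> vd S' \<psi>') \<or>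
        (\<exists>S' \<phi>' \<psi>'. S' \<subseteq> S2 \<and> \<phi>' \<in> hat T2 \<and> \<psi>' \<in> cb \<phi>' \<and> vd S' \<psi>')"
    using prime unfolding prime_setting_def .
  then have "B1 \<inter> B2 = {} \<and> finite X1 \<and> finite Y1 \<and> finite X2 \<and> finite Y2 \<and>
        Atoms atoms X1 \<subseteq> B1 \<and> Atoms atoms Y1 \<subseteq> B1 \<and>
        Atoms atoms X2 \<subseteq> B2 \<and> Atoms atoms Y2 \<subseteq> B2 \<and>
        \<psi> \<in> cb \<chi> \<and> \<chi> \<in> hat (Y1 \<union> Y2) \<and> vd (X1 \<union> X2) \<psi> \<longrightarrow>
        (\<exists>S' \<phi>' \<psi>'. S' \<subseteq> X1 \<and> \<phi>' \<in> hat Y1 \<and> \<psi>' \<in> cb \<phi>' \<and> vd S' \<psi>') \<or>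
        (\<exists>S' \<phi>' \<psi>'. S' \<subseteq> X2 \<and> \<phi>' \<in> hat Y2 \<and> \<psi>' \<in> cb \<phi>' \<and> vd S' \<psi>')"
    by (elim allE)
  then show ?thesis using assms by blast
qed

lemma A1_sub: "A1 \<subseteq> A" unfolding Arg_def by blast

lemma attack_mono:
  assumes "R c (\<Gamma>, \<gamma>)" "\<Gamma> \<subseteq> \<Gamma>'" "finite \<Gamma>'" shows "R c (\<Gamma>', \<gamma>')"
proof -
  obtain \<chi> where "\<chi> \<in> hat \<Gamma>" "snd c \<in> cb \<chi>" using assms(1) unfolding attacks_def by auto
  moreover have "hat \<Gamma> \<subseteq> hat \<Gamma>'" using hat_mono assms(2,3) by blast
  ultimately show ?thesis unfolding attacks_def by auto
qed

lemma disjAt: "Atoms atoms (S1 \<union> {\<phi>}) \<inter> Atoms atoms S2 = {}"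
  using disj unfolding atom_disjoint_def .

lemma split_attack:
  assumes "(\<Delta>, \<delta>) \<in> A" "\<Gamma> \<subseteq> S1" "finite \<Gamma>" "\<psi> \<in> hat \<Gamma>" "\<delta> \<in> cb \<psi>"
  shows "\<exists>S' \<psi>' \<phi>'. S' \<subseteq> \<Delta> \<inter> S1 \<and> \<phi>' \<in> hat \<Gamma> \<and> \<psi>' \<in> cb \<phi>' \<and> vd S' \<psi>'"
proof -
  have D: "\<Delta> \<subseteq> S1 \<union> S2" "finite \<Delta>" "vd \<Delta> \<delta>" using assms(1) unfolding Arg_def by auto
  have e: "(\<Delta> \<inter> S1) \<union> (\<Delta> - S1) = \<Delta>" "\<Gamma> \<union> {} = \<Gamma>" by auto
  have a1: "Atoms atoms (\<Delta> \<inter> S1) \<subseteq> Atoms atoms (S1 \<union> {\<phi>})"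
    by (rule Atoms_mono) blast
  have a1': "Atoms atoms \<Gamma> \<subseteq> Atoms atoms (S1 \<union> {\<phi>})"
    by (rule Atoms_mono) (use assms(2) in blast)
  have a2: "Atoms atoms (\<Delta> - S1) \<subseteq> Atoms atoms S2"
    by (rule Atoms_mono) (use D(1) in blast)
  have a2': "Atoms atoms {} \<subseteq> Atoms atoms S2"
    by (rule Atoms_mono) blast
  have "(\<exists>S' \<phi>' \<psi>'. S' \<subseteq> \<Delta> \<inter> S1 \<and> \<phi>' \<in> hat \<Gamma> \<and> \<psi>' \<in> cb \<phi>' \<and> vd S' \<psi>') \<or>
        (\<exists>S' \<phi>' \<psi>'. S' \<subseteq> \<Delta> - S1 \<and> \<phi>' \<in> hat {} \<and> \<psi>' \<in> cb \<phi>' \<and> vd S' \<psi>')"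
    by (rule prime_rule[OF disjAt _ assms(3) _ _ a1 a1' a2 a2' assms(5)])
      (use D assms(4) e in simp_all)
  then show ?thesis using hat0 by blast
qed

lemma split_attack2:
  assumes "(\<Delta>, \<delta>) \<in> A1" "(\<Gamma>, \<gamma>) \<in> A" "\<psi> \<in> hat \<Gamma>" "\<delta> \<in> cb \<psi>"
  shows "\<exists>S' \<psi>' \<phi>'. S' \<subseteq> \<Delta> \<and> \<phi>' \<in> hat (\<Gamma> \<inter> S1) \<and> \<psi>' \<in> cb \<phi>' \<and> vd S' \<psi>'"
proof -
  have D: "\<Delta> \<subseteq> S1" "finite \<Delta>" "vd \<Delta> \<delta>" using assms(1) unfolding Arg_def by auto
  have G: "\<Gamma> \<subseteq> S1 \<union> S2" "finite \<Gamma>" "vd \<Gamma> \<gamma>" using assms(2) unfolding Arg_def by auto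
  have e: "(\<Gamma> \<inter> S1) \<union> (\<Gamma> - S1) = \<Gamma>" "\<Delta> \<union> {} = \<Delta>" by auto
  have a1: "Atoms atoms \<Delta> \<subseteq> Atoms atoms (S1 \<union> {\<phi>})"
    by (rule Atoms_mono) (use D(1) in blast)
  have a1': "Atoms atoms (\<Gamma> \<inter> S1) \<subseteq> Atoms atoms (S1 \<union> {\<phi>})"
    by (rule Atoms_mono) blast
  have a2: "Atoms atoms {} \<subseteq> Atoms atoms S2"
    by (rule Atoms_mono) blast
  have a2': "Atoms atoms (\<Gamma> - S1) \<subseteq> Atoms atoms S2"
    by (rule Atoms_mono) (use G(1) in blast)
  have "(\<exists>S' \<phi>' \<psi>'. S' \<subseteq> \<Delta> \<and> \<phi>' \<in> hat (\<Gamma> \<inter> S1) \<and> \<psi>' \<in> cb \<phi>' \<and> vd S' \<psi>') \<or>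
        (\<exists>S' \<phi>' \<psi>'. S' \<subseteq> {} \<and> \<phi>' \<in> hat (\<Gamma> - S1) \<and> \<psi>' \<in> cb \<phi>' \<and> vd S' \<psi>')"
    by (rule prime_rule[OF disjAt D(2) _ _ _ a1 a1' a2 a2' assms(4)])
      (use D G assms(3) e in simp_all)
  moreover have "\<not> (\<exists>S' \<phi>' \<psi>'. S' \<subseteq> {} \<and> \<phi>' \<in> hat (\<Gamma> - S1) \<and> \<psi>' \<in> cb \<phi>' \<and> vd S' \<psi>')"
  proof
    assume "\<exists>S' \<phi>' \<psi>'. S' \<subseteq> {} \<and> \<phi>' \<in> hat (\<Gamma> - S1) \<and> \<psi>' \<in> cb \<phi>' \<and> vd S' \<psi>'"
    then obtain S' \<phi>' \<psi>' where h: "S' \<subseteq> {}" "\<phi>' \<in> hat (\<Gamma> - S1)" "\<psi>' \<in> cb \<phi>'" "vd S' \<psi>'" by blast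
    have "vd {} \<psi>'" using h(1,4) by simp
    note h(2,3) this
    moreover have "hat (\<Gamma> - S1) \<subseteq> hat \<Gamma>" using hat_mono G(2) by blast
    ultimately show False using emp G(3) by blast
  qed
  ultimately show ?thesis by blast
qed

lemma closure:
  assumes "complete_ext (Arg vd X) R E" "(\<Gamma>, \<gamma>) \<in> E" "\<Gamma>' \<subseteq> \<Gamma>" "vd \<Gamma>' \<gamma>'"
  shows "(\<Gamma>', \<gamma>') \<in> E"
proof -
  have EA: "E \<subseteq> Arg vd X" and d: "defends (Arg vd X) R E (\<Gamma>, \<gamma>)"
    using assms(1,2) unfolding complete_ext_def admissible_def conflict_free_def by auto
  have G: "\<Gamma> \<subseteq> X" "finite \<Gamma>" using EA assms(2) unfolding Arg_def by auto
  have inA: "(\<Gamma>', \<gamma>') \<in> Arg vd X" using G assms(3,4) fin unfolding Arg_def by auto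
  have "defends (Arg vd X) R E (\<Gamma>', \<gamma>')"
    using d attack_mono[OF _ assms(3) G(2)] unfolding defends_def by blast
  then show ?thesis using assms(1) inA unfolding complete_ext_def by blast
qed

end


context ni begin

lemma att_iff: "R c (\<Gamma>, \<gamma>) \<longleftrightarrow> (\<exists>\<chi>\<in>hat \<Gamma>. snd c \<in> cb \<chi>)"
  unfolding attacks_def by simp

lemma argA1: "S' \<subseteq> S1 \<Longrightarrow> vd S' \<psi>' \<Longrightarrow> (S', \<psi>') \<in> A1"
  unfolding Arg_def using fin by blast

lemma argA_D: "(\<Gamma>, \<gamma>) \<in> Arg vd X \<Longrightarrow> \<Gamma> \<subseteq> X \<and> finite \<Gamma> \<and> vd \<Gamma> \<gamma>"
  unfolding Arg_def by blast

lemma complete_D: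
  assumes "complete_ext B R E"
  shows "E \<subseteq> B" "\<forall>a\<in>E. \<forall>b\<in>E. \<not> R a b" "\<forall>a\<in>E. defends B R E a"
    "\<forall>a\<in>B. defends B R E a \<longrightarrow> a \<in> E"
  using assms unfolding complete_ext_def admissible_def conflict_free_def by blast+

lemma adm_D:
  assumes "admissible B R E"
  shows "E \<subseteq> B" "\<forall>a\<in>E. \<forall>b\<in>E. \<not> R a b" "\<forall>a\<in>E. defends B R E a"
  using assms unfolding admissible_def conflict_free_def by blast+

lemma pure_attacker:
  assumes "b \<in> A" "a \<in> A1" "R b a"
  shows "\<exists>S' \<psi>'. S' \<subseteq> fst b \<inter> S1 \<and> vd S' \<psi>' \<and> R (S', \<psi>') a \<and> (S', \<psi>') \<in> A1"
proof -
  obtain \<Delta> \<delta> where bb: "b = (\<Delta>, \<delta>)" by (cases b)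
  obtain \<Gamma> \<gamma> where aa: "a = (\<Gamma>, \<gamma>)" by (cases a)
  have G: "\<Gamma> \<subseteq> S1" "finite \<Gamma>" using argA_D assms(2) aa by blast+
  obtain \<chi> where ch: "\<chi> \<in> hat \<Gamma>" "\<delta> \<in> cb \<chi>" using assms(3) aa bb att_iff by auto
  have bA: "(\<Delta>, \<delta>) \<in> A" using assms(1) bb by simp
  obtain S' \<psi>' \<phi>' where s: "S' \<subseteq> \<Delta> \<inter> S1" "\<phi>' \<in> hat \<Gamma>" "\<psi>' \<in> cb \<phi>'" "vd S' \<psi>'"
    using split_attack[OF bA G ch] by blast
  have "R (S', \<psi>') a" unfolding aa att_iff using s by auto
  moreover have "(S', \<psi>') \<in> A1" using s argA1 by blast
  ultimately show ?thesis using s bb by auto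
qed

lemma attack_sub:
  assumes "R c (S', \<psi>')" "S' \<subseteq> fst b" "b \<in> Arg vd X"
  shows "R c b"
proof -
  obtain \<Delta> \<delta> where bb: "b = (\<Delta>, \<delta>)" by (cases b)
  have "finite \<Delta>" using assms(3) bb argA_D by blast
  then show ?thesis using attack_mono[OF assms(1)] assms(2) bb by simp
qed

lemma L1:
  assumes c: "complete_ext A R E"
  shows "complete_ext A1 R (E \<inter> A1)"
proof -
  note cD = complete_D[OF c]
  have cf: "conflict_free A1 R (E \<inter> A1)" unfolding conflict_free_def using cD(2) by blast
  have d: "\<forall>a\<in>E \<inter> A1. defends A1 R (E \<inter> A1) a"
  proof (intro ballI)
    fix a assume a: "a \<in> E \<inter> A1"
    show "defends A1 R (E \<inter> A1) a" unfolding defends_def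
    proof (intro ballI impI)
      fix b assume b: "b \<in> A1" "R b a"
      have bA: "b \<in> A" using b A1_sub by blast
      then obtain c where cc: "c \<in> E" "R c b" using cD(3) a b unfolding defends_def by blast
      have cA: "c \<in> A" using cc cD(1) by blast
      obtain S' \<psi>' where s: "S' \<subseteq> fst c \<inter> S1" "vd S' \<psi>'" "R (S', \<psi>') b" "(S', \<psi>') \<in> A1"
        using pure_attacker[OF cA b(1) cc(2)] by blast
      obtain \<Delta> \<delta> where c2: "c = (\<Delta>, \<delta>)" by (cases c)
      have "(S', \<psi>') \<in> E" using closure[OF c] cc(1) c2 s by auto
      then show "\<exists>c\<in>E \<inter> A1. R c b" using s by blast
    qed
  qed
  have cl: "\<forall>a\<in>A1. defends A1 R (E \<inter> A1) a \<longrightarrow> a \<in> E \<inter> A1"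
  proof (intro ballI impI)
    fix a assume a: "a \<in> A1" "defends A1 R (E \<inter> A1) a"
    have "defends A R E a" unfolding defends_def
    proof (intro ballI impI)
      fix b assume b: "b \<in> A" "R b a"
      obtain S' \<psi>' where s: "S' \<subseteq> fst b \<inter> S1" "vd S' \<psi>'" "R (S', \<psi>') a" "(S', \<psi>') \<in> A1"
        using pure_attacker[OF b(1) a(1) b(2)] by blast
      obtain c where cc: "c \<in> E \<inter> A1" "R c (S', \<psi>')" using a(2) s unfolding defends_def by blast
      have "R c b" using attack_sub[OF cc(2) _ b(1)] s by blast
      then show "\<exists>c\<in>E. R c b" using cc by blast
    qed
    moreover have "a \<in> A" using a A1_sub by blast
    ultimately show "a \<in> E \<inter> A1" using cD(4) a by blast
  qed
  show ?thesis unfolding complete_ext_def admissible_def using cf d cl by (intro conjI)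
qed

lemma L2:
  assumes ad: "admissible A1 R E1"
  shows "admissible A R E1"
proof -
  note aD = adm_D[OF ad]
  have cf: "conflict_free A R E1" unfolding conflict_free_def using aD(1,2) A1_sub by blast
  have "\<forall>a\<in>E1. defends A R E1 a"
  proof (intro ballI)
    fix a assume a: "a \<in> E1"
    have aA1: "a \<in> A1" using a aD(1) by blast
    show "defends A R E1 a" unfolding defends_def
    proof (intro ballI impI)
      fix b assume b: "b \<in> A" "R b a"
      obtain S' \<psi>' where s: "S' \<subseteq> fst b \<inter> S1" "vd S' \<psi>'" "R (S', \<psi>') a" "(S', \<psi>') \<in> A1"
        using pure_attacker[OF b(1) aA1 b(2)] by blast
      obtain c where cc: "c \<in> E1" "R c (S', \<psi>')" using aD(3) a s unfolding defends_def by blast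
      have "R c b" using attack_sub[OF cc(2) _ b(1)] s by blast
      then show "\<exists>c\<in>E1. R c b" using cc by blast
    qed
  qed
  then show ?thesis unfolding admissible_def using cf by (intro conjI)
qed

lemma L3:
  assumes c: "complete_ext A R E" and ad: "admissible A1 R E1" and sub: "E \<inter> A1 \<subseteq> E1"
  shows "admissible A R (E \<union> E1)"
proof -
  note cD = complete_D[OF c]
  note aD = adm_D[OF ad]
  note aD2 = adm_D[OF L2[OF ad]]
  have noatt1: "\<not> R x y" if x: "x \<in> E1" and y: "y \<in> E" for x y
  proof
    assume Rxy: "R x y"
    obtain \<Delta> \<delta> where xx: "x = (\<Delta>, \<delta>)" by (cases x)
    obtain \<Gamma> \<gamma> where yy: "y = (\<Gamma>, \<gamma>)" by (cases y)
    have xA1: "(\<Delta>, \<delta>) \<in> A1" using x xx aD(1) by blast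
    have yA: "(\<Gamma>, \<gamma>) \<in> A" using y yy cD(1) by blast
    obtain \<chi> where ch: "\<chi> \<in> hat \<Gamma>" "\<delta> \<in> cb \<chi>" using Rxy xx yy att_iff by auto
    obtain S' \<psi>' \<phi>' where s: "S' \<subseteq> \<Delta>" "\<phi>' \<in> hat (\<Gamma> \<inter> S1)" "\<psi>' \<in> cb \<phi>'" "vd S' \<psi>'"
      using split_attack2[OF xA1 yA ch] by blast
    have D: "\<Delta> \<subseteq> S1" "finite \<Delta>" using argA_D xA1 by blast+
    have G: "finite \<Gamma>" using argA_D yA by blast
    have c'A1: "(S', \<psi>') \<in> A1" using s D argA1 by blast
    have "hat (\<Gamma> \<inter> S1) \<subseteq> hat \<Gamma>" using hat_mono G by blast
    then have "R (S', \<psi>') y" unfolding yy att_iff using s by auto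
    moreover have "(S', \<psi>') \<in> A" using c'A1 A1_sub by blast
    ultimately obtain d where dd: "d \<in> E" "R d (S', \<psi>')" using cD(3) y unfolding defends_def by blast
    have dA: "d \<in> A" using dd cD(1) by blast
    obtain T' \<theta>' where t: "T' \<subseteq> fst d \<inter> S1" "vd T' \<theta>'" "R (T', \<theta>') (S', \<psi>')" "(T', \<theta>') \<in> A1"
      using pure_attacker[OF dA c'A1 dd(2)] by blast
    obtain \<Theta> \<theta> where d2: "d = (\<Theta>, \<theta>)" by (cases d)
    have "(T', \<theta>') \<in> E" using closure[OF c] dd(1) d2 t by auto
    then have tE1: "(T', \<theta>') \<in> E1" using t(4) sub by blast
    have "R (T', \<theta>') x" using attack_sub[OF t(3) _ ] xx s xA1 by auto
    then show False using aD(2) tE1 x by blast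
  qed
  have noatt2: "\<not> R y x" if x: "x \<in> E1" and y: "y \<in> E" for x y
  proof
    assume Ryx: "R y x"
    have yA: "y \<in> A" using y cD(1) by blast
    have xA1: "x \<in> A1" using x aD(1) by blast
    obtain S' \<psi>' where s: "S' \<subseteq> fst y \<inter> S1" "vd S' \<psi>'" "R (S', \<psi>') x" "(S', \<psi>') \<in> A1"
      using pure_attacker[OF yA xA1 Ryx] by blast
    obtain \<Gamma> \<gamma> where y2: "y = (\<Gamma>, \<gamma>)" by (cases y)
    have "(S', \<psi>') \<in> E" using closure[OF c] y y2 s by auto
    then have "(S', \<psi>') \<in> E1" using s(4) sub by blast
    then show False using aD(2) s(3) x by blast
  qed
  have cf: "conflict_free A R (E \<union> E1)" unfolding conflict_free_def
  proof (intro conjI ballI)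
    show "E \<union> E1 \<subseteq> A" using cD(1) aD2(1) by blast
  next
    fix x y assume x: "x \<in> E \<union> E1" and y: "y \<in> E \<union> E1"
    show "\<not> R x y"
    proof (cases "x \<in> E")
      case True
      show ?thesis
      proof (cases "y \<in> E")
        case True
        then show ?thesis using cD(2) \<open>x \<in> E\<close> by blast
      next
        case False
        then have "y \<in> E1" using y by blast
        then show ?thesis using noatt2 \<open>x \<in> E\<close> by blast
      qed
    next
      case False
      then have xE1: "x \<in> E1" using x by blast
      show ?thesis
      proof (cases "y \<in> E")
        case True
        then show ?thesis using noatt1 xE1 by blast
      next
        case False
        then have "y \<in> E1" using y by blast
        then show ?thesis using aD(2) xE1 by blast
      qed
    qed
  qed
  have "\<forall>a\<in>E \<union> E1. defends A R (E \<union> E1) a"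
  proof
    fix a assume "a \<in> E \<union> E1"
    then have "defends A R E a \<or> defends A R E1 a" using cD(3) aD2(3) by blast
    then show "defends A R (E \<union> E1) a" using defends_mono[of E "E \<union> E1"] defends_mono[of E1 "E \<union> E1"] by blast
  qed
  then show ?thesis unfolding admissible_def using cf by (intro conjI)
qed

lemma L4:
  assumes p: "preferred_ext A R E"
  shows "preferred_ext A1 R (E \<inter> A1)"
proof -
  have m: "max_adm A R E" using p preferred_iff by blast
  have c: "complete_ext A R E" using m by (rule max_adm_complete)
  have mx: "\<forall>E'. admissible A R E' \<and> E \<subseteq> E' \<longrightarrow> E' = E" using m unfolding max_adm_def by (rule conjunct2)
  have c1: "complete_ext A1 R (E \<inter> A1)" by (rule L1[OF c])
  have ad1: "admissible A1 R (E \<inter> A1)" using c1 unfolding complete_ext_def by (rule conjunct1)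
  have "\<forall>E'. admissible A1 R E' \<and> E \<inter> A1 \<subseteq> E' \<longrightarrow> E' = E \<inter> A1"
  proof (intro allI impI)
    fix E' assume h: "admissible A1 R E' \<and> E \<inter> A1 \<subseteq> E'"
    have "admissible A R (E \<union> E')" using L3[OF c] h by blast
    moreover have "E \<subseteq> E \<union> E'" by blast
    ultimately have "E \<union> E' = E" using mx by blast
    then have "E' \<subseteq> E" by blast
    moreover have "E' \<subseteq> A1" using h adm_D(1) by blast
    ultimately have "E' \<subseteq> E \<inter> A1" by blast
    then show "E' = E \<inter> A1" using h by (intro subset_antisym) simp_all
  qed
  then have "max_adm A1 R (E \<inter> A1)" unfolding max_adm_def using ad1 by (intro conjI)
  then show ?thesis using preferred_iff by blast
qed

lemma L5:
  assumes p: "preferred_ext A1 R E1"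
  shows "\<exists>M. preferred_ext A R M \<and> M \<inter> A1 = E1"
proof -
  have m1: "max_adm A1 R E1" using p preferred_iff by blast
  have ad1: "admissible A1 R E1" using m1 unfolding max_adm_def by (rule conjunct1)
  have pm: "\<forall>E'. complete_ext A1 R E' \<and> E1 \<subseteq> E' \<longrightarrow> E' = E1" using p unfolding preferred_ext_def by (rule conjunct2)
  obtain M where M: "max_adm A R M" "E1 \<subseteq> M" using exists_max_adm[OF L2[OF ad1]] by blast
  have pM: "preferred_ext A R M" using M(1) preferred_iff by blast
  have "complete_ext A1 R (M \<inter> A1)" using L1 max_adm_complete M(1) by blast
  moreover have "E1 \<subseteq> M \<inter> A1" using M(2) adm_D(1)[OF ad1] by blast
  ultimately have "M \<inter> A1 = E1" using pm by blast
  then show ?thesis using pM by blast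
qed

lemma L6:
  assumes c: "complete_ext A R E" and g: "(\<Gamma>, \<phi>) \<in> E"
  shows "\<exists>\<Gamma>'. (\<Gamma>', \<phi>) \<in> E \<inter> A1"
proof -
  have gA: "(\<Gamma>, \<phi>) \<in> A" using g complete_D(1)[OF c] by blast
  have G: "\<Gamma> \<subseteq> S1 \<union> S2" "finite \<Gamma>" "vd \<Gamma> \<phi>" using argA_D[OF gA] by blast+
  have e: "(\<Gamma> \<inter> S1) \<union> (\<Gamma> - S1) = \<Gamma>" by blast
  have a1: "Atoms atoms ((\<Gamma> \<inter> S1) \<union> {\<phi>}) \<subseteq> Atoms atoms (S1 \<union> {\<phi>})"
    by (rule Atoms_mono) blast
  have a2: "Atoms atoms (\<Gamma> - S1) \<subseteq> Atoms atoms S2"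
    by (rule Atoms_mono) (use G(1) in blast)
  have dj: "atom_disjoint atoms ((\<Gamma> \<inter> S1) \<union> {\<phi>}) (\<Gamma> - S1)"
    unfolding atom_disjoint_def using a1 a2 disjAt by (metis (no_types, lifting) Int_mono subset_empty)
  have vv: "vd ((\<Gamma> \<inter> S1) \<union> (\<Gamma> - S1)) \<phi>" using e G(3) by simp
  obtain \<Gamma>' where g': "\<Gamma>' \<subseteq> \<Gamma> \<inter> S1" "vd \<Gamma>' \<phi>" using relA[OF dj vv] by (elim exE conjE)
  have "(\<Gamma>', \<phi>) \<in> E" using closure[OF c g] g' by blast
  moreover have "(\<Gamma>', \<phi>) \<in> A1" using g' argA1 by blast
  ultimately show ?thesis by blast
qed

lemma NI_prf:
  "af_entails preferred_ext vd cb hat S1 \<phi> \<longleftrightarrow> af_entails preferred_ext vd cb hat (S1 \<union> S2) \<phi>"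
proof
  assume h: "af_entails preferred_ext vd cb hat S1 \<phi>"
  show "af_entails preferred_ext vd cb hat (S1 \<union> S2) \<phi>" unfolding af_entails_def
  proof (intro allI impI)
    fix E assume "preferred_ext A R E"
    then have "preferred_ext A1 R (E \<inter> A1)" by (rule L4)
    then obtain a where "a \<in> E \<inter> A1" "snd a = \<phi>" using h unfolding af_entails_def by blast
    then show "\<exists>a\<in>E. snd a = \<phi>" by blast
  qed
next
  assume h: "af_entails preferred_ext vd cb hat (S1 \<union> S2) \<phi>"
  show "af_entails preferred_ext vd cb hat S1 \<phi>" unfolding af_entails_def
  proof (intro allI impI)
    fix E1 assume "preferred_ext A1 R E1"
    then obtain M where M: "preferred_ext A R M" "M \<inter> A1 = E1" using L5 by blast
    then obtain a where a: "a \<in> M" "snd a = \<phi>" using h unfolding af_entails_def by blast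
    obtain \<Gamma> where "a = (\<Gamma>, \<phi>)" using a(2) by (cases a) auto
    have cM: "complete_ext A R M" using M(1) unfolding preferred_ext_def by (rule conjunct1)
    have "(\<Gamma>, \<phi>) \<in> M" using a \<open>a = (\<Gamma>, \<phi>)\<close> by simp
    then obtain \<Gamma>' where "(\<Gamma>', \<phi>) \<in> M \<inter> A1" using L6[OF cM] by blast
    then show "\<exists>a\<in>E1. snd a = \<phi>" using M(2) by force
  qed
qed

lemma grd_sub1: "lfp (charF A1 R) \<subseteq> lfp (charF A R) \<inter> A1"
  by (rule lfp_le_complete[OF L1[OF complete_lfp]])

lemma grd_sub2: "lfp (charF A R) \<inter> A1 \<subseteq> lfp (charF A1 R)"
proof -
  let ?G1 = "lfp (charF A1 R)"
  have c1: "complete_ext A1 R ?G1" by (rule complete_lfp)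
  note c1D = complete_D[OF c1]
  define X where "X = {d \<in> A. \<forall>b\<in>A1. (\<exists>\<chi>\<in>hat (fst d \<inter> S1). snd b \<in> cb \<chi>) \<longrightarrow> (\<exists>c\<in>?G1. R c b)}"
  have "charF A R X \<subseteq> X"
  proof
    fix a assume a: "a \<in> charF A R X"
    have aA: "a \<in> A" and da: "defends A R X a" using a unfolding charF_def by blast+
    obtain \<Gamma> \<gamma> where aa: "a = (\<Gamma>, \<gamma>)" by (cases a)
    have G: "finite \<Gamma>" using aA aa argA_D by blast
    have "\<forall>b\<in>A1. (\<exists>\<chi>\<in>hat (fst a \<inter> S1). snd b \<in> cb \<chi>) \<longrightarrow> (\<exists>c\<in>?G1. R c b)"
    proof (intro ballI impI)
      fix b assume b: "b \<in> A1" "\<exists>\<chi>\<in>hat (fst a \<inter> S1). snd b \<in> cb \<chi>"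
      have "hat (\<Gamma> \<inter> S1) \<subseteq> hat \<Gamma>" using hat_mono G by blast
      then have "R b a" using b(2) aa att_iff by auto
      moreover have bA: "b \<in> A" using b A1_sub by blast
      ultimately obtain c where cc: "c \<in> X" "R c b" using da unfolding defends_def by blast
      have cA: "c \<in> A" using cc X_def by blast
      obtain S' \<psi>' where s: "S' \<subseteq> fst c \<inter> S1" "vd S' \<psi>'" "R (S', \<psi>') b" "(S', \<psi>') \<in> A1"
        using pure_attacker[OF cA b(1) cc(2)] by blast
      obtain \<Delta> \<delta> where c2: "c = (\<Delta>, \<delta>)" by (cases c)
      have Dfin: "finite \<Delta>" using cA c2 argA_D by blast
      have "defends A1 R ?G1 (S', \<psi>')" unfolding defends_def
      proof (intro ballI impI)
        fix d assume d: "d \<in> A1" "R d (S', \<psi>')"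
        obtain \<chi> where ch: "\<chi> \<in> hat S'" "snd d \<in> cb \<chi>" using d(2) att_iff by blast
        have "hat S' \<subseteq> hat (\<Delta> \<inter> S1)" using hat_mono s(1) c2 Dfin by auto
        then have "\<exists>\<chi>\<in>hat (fst c \<inter> S1). snd d \<in> cb \<chi>" using ch c2 by auto
        then show "\<exists>e\<in>?G1. R e d" using cc(1) d(1) unfolding X_def by blast
      qed
      then have "(S', \<psi>') \<in> ?G1" using c1D(4) s(4) by blast
      then show "\<exists>c\<in>?G1. R c b" using s(3) by blast
    qed
    then show "a \<in> X" unfolding X_def using aA by blast
  qed
  then have GX: "lfp (charF A R) \<subseteq> X" by (rule lfp_lowerbound)
  show ?thesis
  proof
    fix a assume a: "a \<in> lfp (charF A R) \<inter> A1"
    obtain \<Gamma> \<gamma> where aa: "a = (\<Gamma>, \<gamma>)" by (cases a)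
    have G: "\<Gamma> \<subseteq> S1" using a aa argA_D by blast
    have "a \<in> X" using a GX by blast
    then have h: "\<forall>b\<in>A1. (\<exists>\<chi>\<in>hat (\<Gamma> \<inter> S1). snd b \<in> cb \<chi>) \<longrightarrow> (\<exists>c\<in>?G1. R c b)"
      unfolding X_def using aa by simp
    have "\<Gamma> \<inter> S1 = \<Gamma>" using G by blast
    then have "defends A1 R ?G1 a" unfolding defends_def using h aa att_iff by simp
    then show "a \<in> ?G1" using c1D(4) a by blast
  qed
qed

lemma grd_eq: "lfp (charF A R) \<inter> A1 = lfp (charF A1 R)"
  using grd_sub1 grd_sub2 by blast

lemma ent_grd: "af_entails grounded_ext vd cb hat X \<psi> \<longleftrightarrow> (\<exists>a\<in>lfp (charF (Arg vd X) R). snd a = \<psi>)"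
  unfolding af_entails_def grounded_iff by blast

lemma NI_grd:
  "af_entails grounded_ext vd cb hat S1 \<phi> \<longleftrightarrow> af_entails grounded_ext vd cb hat (S1 \<union> S2) \<phi>"
proof
  assume "af_entails grounded_ext vd cb hat S1 \<phi>"
  then obtain a where "a \<in> lfp (charF A1 R)" "snd a = \<phi>" using ent_grd by blast
  then show "af_entails grounded_ext vd cb hat (S1 \<union> S2) \<phi>" using ent_grd grd_sub1 by blast
next
  assume "af_entails grounded_ext vd cb hat (S1 \<union> S2) \<phi>"
  then obtain a where a: "a \<in> lfp (charF A R)" "snd a = \<phi>" using ent_grd by blast
  obtain \<Gamma> where aa: "a = (\<Gamma>, \<phi>)" using a(2) by (cases a) auto
  have "(\<Gamma>, \<phi>) \<in> lfp (charF A R)" using a aa by simp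
  then obtain \<Gamma>' where "(\<Gamma>', \<phi>) \<in> lfp (charF A R) \<inter> A1" using L6[OF complete_lfp] by blast
  then have "(\<Gamma>', \<phi>) \<in> lfp (charF A1 R)" using grd_sub2 by blast
  then show "af_entails grounded_ext vd cb hat S1 \<phi>" using ent_grd by force
qed

end


lemma defends_antimono_B: "B0 \<subseteq> B \<Longrightarrow> defends B R E a \<Longrightarrow> defends B0 R E a"
  unfolding defends_def by blast

lemma transfer:
  assumes st: "is_setting vd cb hat"
  shows "complete_ext (Arg vd S) (attacks cb hat) E \<longleftrightarrow>
         complete_ext (Arg (restrict_empty vd cb hat) S) (attacks cb hat) E"
proof -
  let ?R = "attacks cb hat"
  let ?B = "Arg vd S"
  let ?Bz = "Arg (restrict_empty vd cb hat) S"
  have h0: "hat {} = {}" using st unfolding is_setting_def by blast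
  have unatt: "\<not> ?R x ({}, \<delta>)" for x \<delta> unfolding attacks_def using h0 by simp
  have eB0: "({}, \<delta>) \<in> ?Bz" if "vd {} \<delta>" for \<delta>
    using that h0 unfolding Arg_def by (simp add: restrict_empty_def)
  have sub: "?Bz \<subseteq> ?B" unfolding Arg_def by (auto simp: restrict_empty_def)
  have eB: "({}, \<delta>) \<in> ?B" if "vd {} \<delta>" for \<delta> using eB0[OF that] sub by blast
  have out: "\<exists>\<delta>. vd {} \<delta> \<and> ?R ({}, \<delta>) a" if ab: "a \<in> ?B" "a \<notin> ?Bz" for a
  proof -
    obtain \<Gamma> \<gamma> where aa: "a = (\<Gamma>, \<gamma>)" by (cases a)
    have "\<Gamma> \<subseteq> S" "finite \<Gamma>" "vd \<Gamma> \<gamma>" using ab(1) aa unfolding Arg_def by auto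
    then have "\<exists>\<delta> \<psi>. vd {} \<delta> \<and> \<psi> \<in> hat \<Gamma> \<and> \<delta> \<in> cb \<psi>"
      using ab(2) aa unfolding Arg_def by (auto simp: restrict_empty_def)
    then show ?thesis using aa unfolding attacks_def by auto
  qed
  have allin: "({}, \<delta>) \<in> E" if c: "complete_ext B ?R E" and "({}, \<delta>) \<in> B" for B \<delta>
  proof -
    have "defends B ?R E ({}, \<delta>)" unfolding defends_def using unatt by blast
    then show ?thesis using c that(2) unfolding complete_ext_def by blast
  qed
  show ?thesis
  proof
    assume c: "complete_ext ?B ?R E"
    have EB: "E \<subseteq> ?B" and cf: "\<forall>a\<in>E. \<forall>b\<in>E. \<not> ?R a b" and d: "\<forall>a\<in>E. defends ?B ?R E a"
      and cl: "\<forall>a\<in>?B. defends ?B ?R E a \<longrightarrow> a \<in> E"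
      using c unfolding complete_ext_def admissible_def conflict_free_def by blast+
    have EB0: "E \<subseteq> ?Bz"
    proof
      fix a assume a: "a \<in> E"
      show "a \<in> ?Bz"
      proof (rule ccontr)
        assume "a \<notin> ?Bz"
        then obtain \<delta> where "vd {} \<delta>" "?R ({}, \<delta>) a" using out a EB by blast
        moreover then have "({}, \<delta>) \<in> E" using allin[OF c] eB by blast
        ultimately show False using cf a by blast
      qed
    qed
    have d0: "\<forall>a\<in>E. defends ?Bz ?R E a" using d defends_antimono_B[OF sub] by blast
    have cl0: "\<forall>a\<in>?Bz. defends ?Bz ?R E a \<longrightarrow> a \<in> E"
    proof (intro ballI impI)
      fix a assume a: "a \<in> ?Bz" "defends ?Bz ?R E a"
      have "defends ?B ?R E a" unfolding defends_def
      proof (intro ballI impI)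
        fix b assume b: "b \<in> ?B" "?R b a"
        show "\<exists>c\<in>E. ?R c b"
        proof (cases "b \<in> ?Bz")
          case True then show ?thesis using a(2) b unfolding defends_def by blast
        next
          case False
          then obtain \<delta> where "vd {} \<delta>" "?R ({}, \<delta>) b" using out b by blast
          moreover then have "({}, \<delta>) \<in> E" using allin[OF c] eB by blast
          ultimately show ?thesis by blast
        qed
      qed
      then show "a \<in> E" using cl a sub by blast
    qed
    show "complete_ext ?Bz ?R E" unfolding complete_ext_def admissible_def conflict_free_def
      using EB0 cf d0 cl0 by blast
  next
    assume c: "complete_ext ?Bz ?R E"
    have EB0: "E \<subseteq> ?Bz" and cf: "\<forall>a\<in>E. \<forall>b\<in>E. \<not> ?R a b" and d: "\<forall>a\<in>E. defends ?Bz ?R E a"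
      and cl: "\<forall>a\<in>?Bz. defends ?Bz ?R E a \<longrightarrow> a \<in> E"
      using c unfolding complete_ext_def admissible_def conflict_free_def by blast+
    have dfull: "defends ?B ?R E a" if a: "defends ?Bz ?R E a" for a
      unfolding defends_def
    proof (intro ballI impI)
      fix b assume b: "b \<in> ?B" "?R b a"
      show "\<exists>c\<in>E. ?R c b"
      proof (cases "b \<in> ?Bz")
        case True then show ?thesis using a b unfolding defends_def by blast
      next
        case False
        then obtain \<delta> where "vd {} \<delta>" "?R ({}, \<delta>) b" using out b by blast
        moreover then have "({}, \<delta>) \<in> E" using allin[OF c] eB0 by blast
        ultimately show ?thesis by blast
      qed
    qed
    have d1: "\<forall>a\<in>E. defends ?B ?R E a" using d dfull by blast
    have cl1: "\<forall>a\<in>?B. defends ?B ?R E a \<longrightarrow> a \<in> E"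
    proof (intro ballI impI)
      fix a assume a: "a \<in> ?B" "defends ?B ?R E a"
      have aB0: "a \<in> ?Bz"
      proof (rule ccontr)
        assume "a \<notin> ?Bz"
        then obtain \<delta> where dd: "vd {} \<delta>" "?R ({}, \<delta>) a" using out a by blast
        then obtain c where "?R c ({}, \<delta>)" using a(2) eB unfolding defends_def by blast
        then show False using unatt by blast
      qed
      have "defends ?Bz ?R E a" using a(2) defends_antimono_B[OF sub] by blast
      then show "a \<in> E" using cl aB0 by blast
    qed
    show "complete_ext ?B ?R E" unfolding complete_ext_def admissible_def conflict_free_def
      using EB0 sub cf d1 cl1 by blast
  qed
qed

lemma ent_eq:
  assumes st: "is_setting vd cb hat"
  shows "af_entails grounded_ext vd cb hat S \<psi> = af_entails grounded_ext (restrict_empty vd cb hat) cb hat S \<psi>"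
    "af_entails preferred_ext vd cb hat S \<psi> = af_entails preferred_ext (restrict_empty vd cb hat) cb hat S \<psi>"
proof -
  have eq: "complete_ext (Arg vd S) (attacks cb hat) = complete_ext (Arg (restrict_empty vd cb hat) S) (attacks cb hat)"
    by (rule ext) (rule transfer[OF st])
  show "af_entails grounded_ext vd cb hat S \<psi> = af_entails grounded_ext (restrict_empty vd cb hat) cb hat S \<psi>"
    unfolding af_entails_def grounded_ext_def eq ..
  show "af_entails preferred_ext vd cb hat S \<psi> = af_entails preferred_ext (restrict_empty vd cb hat) cb hat S \<psi>"
    unfolding af_entails_def preferred_ext_def eq ..
qed

theorem corollary1:
  fixes atoms :: "'f \<Rightarrow> 'a set"
    and vd :: "'f set \<Rightarrow> 'f \<Rightarrow> bool"
    and cb :: "'f \<Rightarrow> 'f set"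
    and hat :: "'f set \<Rightarrow> 'f set"
  assumes "is_setting vd cb hat"
    and "pre_relevance atoms (restrict_empty vd cb hat) cb hat"
  shows "non_interference atoms (af_entails grounded_ext vd cb hat)
       \<and> non_interference atoms (af_entails preferred_ext vd cb hat)"
proof -
  let ?vd0 = "restrict_empty vd cb hat"
  have h0: "hat {} = {}" using assms(1) unfolding is_setting_def by blast
  have loc: "ni atoms ?vd0 cb hat S1 S2 \<phi>" if "atom_disjoint atoms (S1 \<union> {\<phi>}) S2" for S1 S2 \<phi>
  proof
    show "finite \<Gamma>" if "?vd0 \<Gamma> \<gamma>" for \<Gamma> \<gamma>
      using that assms(1) unfolding restrict_empty_def is_setting_def by blast
    show "hat {} = {}" by (rule h0)
    show "\<delta> \<notin> cb \<psi>" if "?vd0 \<Gamma> \<gamma>" "?vd0 {} \<delta>" "\<psi> \<in> hat \<Gamma>" for \<Gamma> \<gamma> \<delta> \<psi>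
      using that unfolding restrict_empty_def by blast
    show "pre_relevance atoms ?vd0 cb hat" by (rule assms(2))
    show "atom_disjoint atoms (S1 \<union> {\<phi>}) S2" by (rule that)
  qed
  show ?thesis
    unfolding non_interference_def
  proof (intro conjI allI impI)
    fix S1 S2 \<phi> assume d: "atom_disjoint atoms (S1 \<union> {\<phi>}) S2"
    show "af_entails grounded_ext vd cb hat S1 \<phi> = af_entails grounded_ext vd cb hat (S1 \<union> S2) \<phi>"
      unfolding ent_eq[OF assms(1)] using ni.NI_grd[OF loc[OF d]] .
    show "af_entails preferred_ext vd cb hat S1 \<phi> = af_entails preferred_ext vd cb hat (S1 \<union> S2) \<phi>"
      unfolding ent_eq[OF assms(1)] using ni.NI_prf[OF loc[OF d]] .
  qed
qed

end
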